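(* The maximal Lie algebra of point symmetries (maximal invariance algebra in the sense of Lie) of the partial differential equation $$u_t+(u_x+u_{xx})^2=0$$ for $u=u(t,x)$ is five-dimensional, with basis $$X_1=-\partial_x,\quad X_2=-e^{-x}\partial_u,\quad X_3=\partial_t,\quad X_4=\partial_u,\quad X_5=t\partial_t-u\partial_u,$$ whose only non-zero commutators are $[X_1,X_2]=X_2$, $[X_2,X_5]=-X_2$, $[X_3,X_5]=X_3$, $[X_4,X_5]=-X_4$. *)

theory Defs
  imports "HOL-Analysis.Analysis"
begin

text \<open>Point vector fields Q = tau d_t + xi d_x + eta d_u on R^3 with coordinates (t,x,u).\<close>

type_synonym fn3 = "real \<Rightarrow> real \<Rightarrow> real \<Rightarrow> real"
type_synonym fn2 = "real \<Rightarrow> real \<Rightarrow> real"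

datatype vf = VF (tau: fn3) (xi: fn3) (eta: fn3)

definition pt :: "fn3 \<Rightarrow> fn3" where "pt f = (\<lambda>t x u. deriv (\<lambda>s. f s x u) t)"
definition px :: "fn3 \<Rightarrow> fn3" where "px f = (\<lambda>t x u. deriv (\<lambda>s. f t s u) x)"
definition pu :: "fn3 \<Rightarrow> fn3" where "pu f = (\<lambda>t x u. deriv (\<lambda>s. f t x s) u)"

definition dt :: "fn2 \<Rightarrow> fn2" where "dt U = (\<lambda>t x. deriv (\<lambda>s. U s x) t)"
definition dx :: "fn2 \<Rightarrow> fn2" where "dx U = (\<lambda>t x. deriv (\<lambda>s. U t s) x)"

inductive_set partials3 :: "fn3 \<Rightarrow> fn3 set" for f where
  "f \<in> partials3 f"
| "g \<in> partials3 f \<Longrightarrow> pt g \<in> partials3 f"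
| "g \<in> partials3 f \<Longrightarrow> px g \<in> partials3 f"
| "g \<in> partials3 f \<Longrightarrow> pu g \<in> partials3 f"

inductive_set partials2 :: "fn2 \<Rightarrow> fn2 set" for U where
  "U \<in> partials2 U"
| "g \<in> partials2 U \<Longrightarrow> dt g \<in> partials2 U"
| "g \<in> partials2 U \<Longrightarrow> dx g \<in> partials2 U"

definition smooth3 :: "fn3 \<Rightarrow> bool" where
  "smooth3 f \<longleftrightarrow> (\<forall>g \<in> partials3 f.
      continuous_on UNIV (\<lambda>(t,x,u). g t x u) \<and>
      (\<forall>t x u. (\<lambda>s. g s x u) differentiable (at t) \<and>
               (\<lambda>s. g t s u) differentiable (at x) \<and>
               (\<lambda>s. g t x s) differentiable (at u)))"

definition smooth2 :: "fn2 \<Rightarrow> bool" where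
  "smooth2 U \<longleftrightarrow> (\<forall>g \<in> partials2 U.
      continuous_on UNIV (\<lambda>(t,x). g t x) \<and>
      (\<forall>t x. (\<lambda>s. g s x) differentiable (at t) \<and> (\<lambda>s. g t s) differentiable (at x)))"

definition eqn :: "fn2 \<Rightarrow> real \<Rightarrow> real \<Rightarrow> bool" where
  "eqn U t x \<longleftrightarrow> dt U t x + (dx U t x + dx (dx U) t x)^2 = 0"

definition charQ :: "vf \<Rightarrow> fn2 \<Rightarrow> fn2" where
  "charQ Q U = (\<lambda>t x. eta Q t x (U t x) - tau Q t x (U t x) * dt U t x
                       - xi Q t x (U t x) * dx U t x)"

text \<open>Coefficients of the second prolongation, evaluated along the 2-jet of U
  (total derivatives D_t, D_x evaluated on the graph of U).\<close>
definition etaT :: "vf \<Rightarrow> fn2 \<Rightarrow> fn2" where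
  "etaT Q U = (\<lambda>t x. dt (charQ Q U) t x + tau Q t x (U t x) * dt (dt U) t x
                      + xi Q t x (U t x) * dt (dx U) t x)"
definition etaX :: "vf \<Rightarrow> fn2 \<Rightarrow> fn2" where
  "etaX Q U = (\<lambda>t x. dx (charQ Q U) t x + tau Q t x (U t x) * dx (dt U) t x
                      + xi Q t x (U t x) * dx (dx U) t x)"
definition etaXX :: "vf \<Rightarrow> fn2 \<Rightarrow> fn2" where
  "etaXX Q U = (\<lambda>t x. dx (dx (charQ Q U)) t x + tau Q t x (U t x) * dx (dx (dt U)) t x
                      + xi Q t x (U t x) * dx (dx (dx U)) t x)"

text \<open>pr^(2) Q applied to F = u_t + (u_x+u_xx)^2, evaluated along U.\<close>
definition prolF :: "vf \<Rightarrow> fn2 \<Rightarrow> fn2" where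
  "prolF Q U = (\<lambda>t x. etaT Q U t x
      + 2 * (dx U t x + dx (dx U) t x) * (etaX Q U t x + etaXX Q U t x))"

text \<open>Lie point symmetry (infinitesimal invariance criterion): smooth Q with
  pr^(2) Q F = 0 on the solution manifold F = 0 of the jet space; every 2-jet point
  is realised by a smooth U, so we quantify over smooth U and points.\<close>
definition is_sym :: "vf \<Rightarrow> bool" where
  "is_sym Q \<longleftrightarrow> smooth3 (tau Q) \<and> smooth3 (xi Q) \<and> smooth3 (eta Q) \<and>
     (\<forall>U. smooth2 U \<longrightarrow> (\<forall>t x. eqn U t x \<longrightarrow> prolF Q U t x = 0))"

definition vzero :: vf where "vzero = VF (\<lambda>_ _ _. 0) (\<lambda>_ _ _. 0) (\<lambda>_ _ _. 0)"
definition vneg :: "vf \<Rightarrow> vf" where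
  "vneg Q = VF (\<lambda>t x u. - tau Q t x u) (\<lambda>t x u. - xi Q t x u) (\<lambda>t x u. - eta Q t x u)"

definition vapp :: "vf \<Rightarrow> fn3 \<Rightarrow> fn3" where
  "vapp Q f = (\<lambda>t x u. tau Q t x u * pt f t x u + xi Q t x u * px f t x u
                      + eta Q t x u * pu f t x u)"

definition bracket :: "vf \<Rightarrow> vf \<Rightarrow> vf" where
  "bracket P Q = VF (\<lambda>t x u. vapp P (tau Q) t x u - vapp Q (tau P) t x u)
                    (\<lambda>t x u. vapp P (xi Q) t x u - vapp Q (xi P) t x u)
                    (\<lambda>t x u. vapp P (eta Q) t x u - vapp Q (eta P) t x u)"

definition X :: "nat \<Rightarrow> vf" where
  "X i = (if i = 1 then VF (\<lambda>_ _ _. 0) (\<lambda>_ _ _. -1) (\<lambda>_ _ _. 0)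
     else if i = 2 then VF (\<lambda>_ _ _. 0) (\<lambda>_ _ _. 0) (\<lambda>t x u. - exp (- x))
     else if i = 3 then VF (\<lambda>_ _ _. 1) (\<lambda>_ _ _. 0) (\<lambda>_ _ _. 0)
     else if i = 4 then VF (\<lambda>_ _ _. 0) (\<lambda>_ _ _. 0) (\<lambda>_ _ _. 1)
     else if i = 5 then VF (\<lambda>t x u. t) (\<lambda>_ _ _. 0) (\<lambda>t x u. - u)
     else vzero)"

definition lincomb :: "(nat \<Rightarrow> real) \<Rightarrow> vf" where
  "lincomb c = VF (\<lambda>t x u. \<Sum>i=1..5. c i * tau (X i) t x u)
                  (\<lambda>t x u. \<Sum>i=1..5. c i * xi (X i) t x u)
                  (\<lambda>t x u. \<Sum>i=1..5. c i * eta (X i) t x u)"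

end

theory Submission
  imports Defs
begin


lemma chain2:
  fixes F :: "real \<Rightarrow> real \<Rightarrow> real" and Fy :: "real \<Rightarrow> real \<Rightarrow> real"
  assumes Fx: "((\<lambda>s. F s y0) has_real_derivative A) (at s0)"
  assumes Fy: "\<And>s y. ((\<lambda>y. F s y) has_real_derivative Fy s y) (at y)"
  assumes cont: "continuous_on UNIV (\<lambda>(s,y). Fy s y)"
  assumes c: "(c has_real_derivative C) (at s0)" "c s0 = y0"
  shows "((\<lambda>s. F s (c s)) has_real_derivative (A + Fy s0 y0 * C)) (at s0)"
proof -
  have d1: "((\<lambda>(x, y). F x y) has_derivative (\<lambda>(tx, ty). tx * A + blinfun_mult_right (Fy s0 y0) ty)) (at (s0, y0) within UNIV \<times> UNIV)"
  proof (rule has_derivative_partialsI)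
    show "((\<lambda>x. F x y0) has_derivative (\<lambda>tx. tx * A)) (at s0 within UNIV)"
      using Fx by (simp add: has_field_derivative_def mult_commute_abs)
    show "((\<lambda>y. F x y) has_derivative blinfun_apply (blinfun_mult_right (Fy x y))) (at y within UNIV)" for x y
      using Fy[of x y] by (simp add: has_field_derivative_def mult.commute)
    have "continuous (at (s0,y0)) (\<lambda>(x, y). Fy x y)"
      using cont by (simp add: continuous_on_eq_continuous_at)
    then show "continuous (at (s0, y0) within UNIV \<times> UNIV) (\<lambda>(x, y). blinfun_mult_right (Fy x y))"
      using bounded_linear.continuous[OF bounded_linear_blinfun_mult_right]
      by (simp add: case_prod_unfold)
  qed auto
  have d2: "((\<lambda>s. (s, c s)) has_derivative (\<lambda>h. (h, h * C))) (at s0)"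
    using c(1) by (auto intro!: derivative_eq_intros simp: has_field_derivative_def mult.commute)
  have d1': "((\<lambda>(x, y). F x y) has_derivative (\<lambda>(tx, ty). tx * A + blinfun_mult_right (Fy s0 y0) ty)) (at (s0, c s0))"
    using d1 c(2) by simp
  have "((\<lambda>(x, y). F x y) \<circ> (\<lambda>s. (s, c s)) has_derivative (\<lambda>(tx, ty). tx * A + blinfun_mult_right (Fy s0 y0) ty) \<circ> (\<lambda>h. (h, h * C))) (at s0)"
    by (rule diff_chain_at[OF d2 d1'])
  moreover have "(\<lambda>(tx, ty). tx * A + blinfun_mult_right (Fy s0 y0) ty) \<circ> (\<lambda>h. (h, h * C)) = (\<lambda>h. (A + Fy s0 y0 * C) * h)"
    by (auto simp: o_def fun_eq_iff algebra_simps)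
  ultimately show ?thesis
    by (simp add: has_field_derivative_def o_def)
qed

lemma partials3_trans: "h \<in> partials3 g \<Longrightarrow> g \<in> partials3 f \<Longrightarrow> h \<in> partials3 f"
  by (induction h rule: partials3.induct) (auto intro: partials3.intros)

lemma smooth3_sub: "smooth3 f \<Longrightarrow> g \<in> partials3 f \<Longrightarrow> smooth3 g"
  unfolding smooth3_def using partials3_trans by blast

lemma smooth3_pt: "smooth3 f \<Longrightarrow> smooth3 (pt f)"
  and smooth3_px: "smooth3 f \<Longrightarrow> smooth3 (px f)"
  and smooth3_pu: "smooth3 f \<Longrightarrow> smooth3 (pu f)"
  by (auto intro: smooth3_sub partials3.intros)

lemma smooth3_cont: "smooth3 f \<Longrightarrow> continuous_on UNIV (\<lambda>(t,x,u). f t x u)"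
  unfolding smooth3_def by (auto intro: partials3.intros)

lemma smooth3_Dt: "smooth3 f \<Longrightarrow> ((\<lambda>s. f s x u) has_real_derivative pt f t x u) (at t)"
  unfolding smooth3_def pt_def using partials3.intros(1)[of f]
  by (simp add: DERIV_deriv_iff_real_differentiable)
lemma smooth3_Dx: "smooth3 f \<Longrightarrow> ((\<lambda>s. f t s u) has_real_derivative px f t x u) (at x)"
  unfolding smooth3_def px_def using partials3.intros(1)[of f]
  by (simp add: DERIV_deriv_iff_real_differentiable)
lemma smooth3_Du: "smooth3 f \<Longrightarrow> ((\<lambda>s. f t x s) has_real_derivative pu f t x u) (at u)"
  unfolding smooth3_def pu_def using partials3.intros(1)[of f]
  by (simp add: DERIV_deriv_iff_real_differentiable)

lemma chainT:
  assumes f: "smooth3 f" and c: "(c has_real_derivative C) (at t0)"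
  shows "((\<lambda>s. f s x0 (c s)) has_real_derivative (pt f t0 x0 (c t0) + pu f t0 x0 (c t0) * C)) (at t0)"
proof (rule chain2[where F="\<lambda>s y. f s x0 y" and Fy="\<lambda>s y. pu f s x0 y"])
  show "((\<lambda>s. f s x0 (c t0)) has_real_derivative pt f t0 x0 (c t0)) (at t0)" by (rule smooth3_Dt[OF f])
  show "((\<lambda>y. f s x0 y) has_real_derivative pu f s x0 y) (at y)" for s y by (rule smooth3_Du[OF f])
  have "continuous_on UNIV ((\<lambda>(t,x,u). pu f t x u) \<circ> (\<lambda>(s,y). (s,x0,y)))"
    by (rule continuous_on_compose[OF _ continuous_on_subset[OF smooth3_cont[OF smooth3_pu[OF f]]]])
       (auto intro!: continuous_intros simp: case_prod_unfold)
  then show "continuous_on UNIV (\<lambda>(s,y). pu f s x0 y)" by (simp add: o_def case_prod_unfold)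
qed (use c in auto)

lemma chainX:
  assumes f: "smooth3 f" and c: "(c has_real_derivative C) (at x0)"
  shows "((\<lambda>s. f t0 s (c s)) has_real_derivative (px f t0 x0 (c x0) + pu f t0 x0 (c x0) * C)) (at x0)"
proof (rule chain2[where F="\<lambda>s y. f t0 s y" and Fy="\<lambda>s y. pu f t0 s y"])
  show "((\<lambda>s. f t0 s (c x0)) has_real_derivative px f t0 x0 (c x0)) (at x0)" by (rule smooth3_Dx[OF f])
  show "((\<lambda>y. f t0 s y) has_real_derivative pu f t0 s y) (at y)" for s y by (rule smooth3_Du[OF f])
  have "continuous_on UNIV ((\<lambda>(t,x,u). pu f t x u) \<circ> (\<lambda>(s,y). (t0,s,y)))"
    by (rule continuous_on_compose[OF _ continuous_on_subset[OF smooth3_cont[OF smooth3_pu[OF f]]]])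
       (auto intro!: continuous_intros simp: case_prod_unfold)
  then show "continuous_on UNIV (\<lambda>(s,y). pu f t0 s y)" by (simp add: o_def case_prod_unfold)
qed (use c in auto)

definition QF :: "real \<Rightarrow> real \<Rightarrow> real \<Rightarrow> real \<Rightarrow> real \<Rightarrow> real \<Rightarrow> real \<Rightarrow> fn2" where
  "QF t0 x0 a b c e f = (\<lambda>t x. a + b*(t-t0) + c*(x-x0) + e*(t-t0)*(x-x0) + f*(x-x0)^2)"

lemma dt_QF: "dt (QF t0 x0 a b c e f) = QF t0 x0 b 0 e 0 0"
  unfolding dt_def QF_def
  by (intro ext DERIV_imp_deriv) (auto intro!: derivative_eq_intros simp: algebra_simps)

lemma dx_QF: "dx (QF t0 x0 a b c e f) = QF t0 x0 c e (2*f) 0 0"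
  unfolding dx_def QF_def
  by (intro ext DERIV_imp_deriv) (auto intro!: derivative_eq_intros simp: algebra_simps)

lemma partials2_QF: "g \<in> partials2 (QF t0 x0 a b c e f) \<Longrightarrow> \<exists>a b c e f. g = QF t0 x0 a b c e f"
  by (induction g rule: partials2.induct) (blast, (auto simp: dt_QF dx_QF)[1], blast, (auto simp: dt_QF dx_QF)[1], blast)

lemma smooth2_QF: "smooth2 (QF t0 x0 a b c e f)"
  unfolding smooth2_def
proof
  fix g assume "g \<in> partials2 (QF t0 x0 a b c e f)"
  then obtain a b c e f where g: "g = QF t0 x0 a b c e f" using partials2_QF by blast
  show "continuous_on UNIV (\<lambda>(t, x). g t x) \<and>
         (\<forall>t x. (\<lambda>s. g s x) differentiable at t \<and> (\<lambda>s. g t s) differentiable at x)"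
    unfolding g QF_def by (auto intro!: continuous_intros derivative_intros simp: case_prod_unfold)
qed

lemma dt_char:
  assumes Tf: "smooth3 Tf" and Xf: "smooth3 Xf" and Ef: "smooth3 Ef"
  shows "dt (charQ (VF Tf Xf Ef) (QF t0 x0 u0 p q w (r/2))) t0 x0 =
    pt Ef t0 x0 u0 + pu Ef t0 x0 u0 * p - (pt Tf t0 x0 u0 + pu Tf t0 x0 u0 * p) * p
    - ((pt Xf t0 x0 u0 + pu Xf t0 x0 u0 * p) * q + Xf t0 x0 u0 * w)"
proof -
  define c where "c = (\<lambda>s. u0 + p*(s-t0))"
  have cd: "(c has_real_derivative p) (at t0)" unfolding c_def by (auto intro!: derivative_eq_intros)
  have c0: "c t0 = u0" by (simp add: c_def)
  have eq: "(\<lambda>s. charQ (VF Tf Xf Ef) (QF t0 x0 u0 p q w (r/2)) s x0) =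
     (\<lambda>s. Ef s x0 (c s) - Tf s x0 (c s) * p - Xf s x0 (c s) * (q + w*(s-t0)))"
    unfolding charQ_def dt_QF dx_QF by (simp add: QF_def c_def fun_eq_iff)
  have hE: "((\<lambda>s. Ef s x0 (c s)) has_real_derivative (pt Ef t0 x0 u0 + pu Ef t0 x0 u0 * p)) (at t0)"
    using chainT[OF Ef cd, of x0] c0 by simp
  have hT: "((\<lambda>s. Tf s x0 (c s)) has_real_derivative (pt Tf t0 x0 u0 + pu Tf t0 x0 u0 * p)) (at t0)"
    using chainT[OF Tf cd, of x0] c0 by simp
  have hX: "((\<lambda>s. Xf s x0 (c s)) has_real_derivative (pt Xf t0 x0 u0 + pu Xf t0 x0 u0 * p)) (at t0)"
    using chainT[OF Xf cd, of x0] c0 by simp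
  have "((\<lambda>s. Ef s x0 (c s) - Tf s x0 (c s) * p - Xf s x0 (c s) * (q + w*(s-t0))) has_real_derivative
    pt Ef t0 x0 u0 + pu Ef t0 x0 u0 * p - (pt Tf t0 x0 u0 + pu Tf t0 x0 u0 * p) * p
    - ((pt Xf t0 x0 u0 + pu Xf t0 x0 u0 * p) * q + Xf t0 x0 u0 * w)) (at t0)"
    by (auto intro!: derivative_eq_intros hE hT hX simp: algebra_simps c0)
  then show ?thesis unfolding dt_def eq by (rule DERIV_imp_deriv)
qed

lemma dx_char:
  fixes u0 q r x0 :: real
  assumes T: "smooth3 Tf" and X: "smooth3 Xf" and E: "smooth3 Ef"
  defines "c \<equiv> (\<lambda>s. u0 + q*(s-x0) + r*(s-x0)^2/2)"
  defines "c' \<equiv> (\<lambda>s. q + r*(s-x0))"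
  shows "dx (charQ (VF Tf Xf Ef) (QF t0 x0 u0 p q w (r/2))) t0 x =
    px Ef t0 x (c x) + pu Ef t0 x (c x) * c' x
    - ((px Tf t0 x (c x) + pu Tf t0 x (c x) * c' x) * (p + w*(x-x0)) + Tf t0 x (c x) * w)
    - ((px Xf t0 x (c x) + pu Xf t0 x (c x) * c' x) * c' x + Xf t0 x (c x) * r)"
proof -
  have cd: "(c has_real_derivative c' x) (at x)" unfolding c_def c'_def
    by (auto intro!: derivative_eq_intros simp: field_simps)
  have eq: "(\<lambda>s. charQ (VF Tf Xf Ef) (QF t0 x0 u0 p q w (r/2)) t0 s) =
     (\<lambda>s. Ef t0 s (c s) - Tf t0 s (c s) * (p + w*(s-x0)) - Xf t0 s (c s) * c' s)"
    unfolding charQ_def dt_QF dx_QF by (simp add: QF_def c_def c'_def fun_eq_iff)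
  have hE: "((\<lambda>s. Ef t0 s (c s)) has_real_derivative (px Ef t0 x (c x) + pu Ef t0 x (c x) * c' x)) (at x)"
    using chainX[OF E cd, of t0] by simp
  have hT: "((\<lambda>s. Tf t0 s (c s)) has_real_derivative (px Tf t0 x (c x) + pu Tf t0 x (c x) * c' x)) (at x)"
    using chainX[OF T cd, of t0] by simp
  have hX: "((\<lambda>s. Xf t0 s (c s)) has_real_derivative (px Xf t0 x (c x) + pu Xf t0 x (c x) * c' x)) (at x)"
    using chainX[OF X cd, of t0] by simp
  have hc': "(c' has_real_derivative r) (at x)" unfolding c'_def
    by (auto intro!: derivative_eq_intros)
  have "((\<lambda>s. Ef t0 s (c s) - Tf t0 s (c s) * (p + w*(s-x0)) - Xf t0 s (c s) * c' s) has_real_derivative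
    px Ef t0 x (c x) + pu Ef t0 x (c x) * c' x
    - ((px Tf t0 x (c x) + pu Tf t0 x (c x) * c' x) * (p + w*(x-x0)) + Tf t0 x (c x) * w)
    - ((px Xf t0 x (c x) + pu Xf t0 x (c x) * c' x) * c' x + Xf t0 x (c x) * r)) (at x)"
    by (auto intro!: derivative_eq_intros hE hT hX hc' simp: algebra_simps)
  then show ?thesis unfolding dx_def eq by (rule DERIV_imp_deriv)
qed

lemma dxx_char:
  fixes u0 q r x0 :: real
  assumes T: "smooth3 Tf" and X: "smooth3 Xf" and E: "smooth3 Ef"
  shows "dx (dx (charQ (VF Tf Xf Ef) (QF t0 x0 u0 p q w (r/2)))) t0 x0 =
    (px (px Ef) t0 x0 u0 + pu (px Ef) t0 x0 u0 * q) + (px (pu Ef) t0 x0 u0 + pu (pu Ef) t0 x0 u0 * q) * q + pu Ef t0 x0 u0 * r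
    - ((px (px Tf) t0 x0 u0 + pu (px Tf) t0 x0 u0 * q + (px (pu Tf) t0 x0 u0 + pu (pu Tf) t0 x0 u0 * q) * q + pu Tf t0 x0 u0 * r) * p
       + 2 * (px Tf t0 x0 u0 + pu Tf t0 x0 u0 * q) * w)
    - ((px (px Xf) t0 x0 u0 + pu (px Xf) t0 x0 u0 * q + (px (pu Xf) t0 x0 u0 + pu (pu Xf) t0 x0 u0 * q) * q + pu Xf t0 x0 u0 * r) * q
       + 2 * (px Xf t0 x0 u0 + pu Xf t0 x0 u0 * q) * r)"
proof -
  define c where "c = (\<lambda>s. u0 + q*(s-x0) + r*(s-x0)^2/2)"
  define c' where "c' = (\<lambda>s::real. q + r*(s-x0))"
  have cd: "(c has_real_derivative c' x0) (at x0)" unfolding c_def c'_def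
    by (auto intro!: derivative_eq_intros simp: field_simps)
  have c0: "c x0 = u0" "c' x0 = q" by (simp_all add: c_def c'_def)
  have eq: "(\<lambda>s. dx (charQ (VF Tf Xf Ef) (QF t0 x0 u0 p q w (r/2))) t0 s) = (\<lambda>x.
    px Ef t0 x (c x) + pu Ef t0 x (c x) * c' x
    - ((px Tf t0 x (c x) + pu Tf t0 x (c x) * c' x) * (p + w*(x-x0)) + Tf t0 x (c x) * w)
    - ((px Xf t0 x (c x) + pu Xf t0 x (c x) * c' x) * c' x + Xf t0 x (c x) * r))"
    unfolding c_def c'_def by (rule ext, rule dx_char[OF T X E])
  note ch = chainX[OF _ cd, of _ t0, unfolded c0]
  have hc': "(c' has_real_derivative r) (at x0)" unfolding c'_def
    by (auto intro!: derivative_eq_intros)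
  have "((\<lambda>x.
    px Ef t0 x (c x) + pu Ef t0 x (c x) * c' x
    - ((px Tf t0 x (c x) + pu Tf t0 x (c x) * c' x) * (p + w*(x-x0)) + Tf t0 x (c x) * w)
    - ((px Xf t0 x (c x) + pu Xf t0 x (c x) * c' x) * c' x + Xf t0 x (c x) * r)) has_real_derivative
    (px (px Ef) t0 x0 u0 + pu (px Ef) t0 x0 u0 * q) + (px (pu Ef) t0 x0 u0 + pu (pu Ef) t0 x0 u0 * q) * q + pu Ef t0 x0 u0 * r
    - ((px (px Tf) t0 x0 u0 + pu (px Tf) t0 x0 u0 * q + (px (pu Tf) t0 x0 u0 + pu (pu Tf) t0 x0 u0 * q) * q + pu Tf t0 x0 u0 * r) * p
       + 2 * (px Tf t0 x0 u0 + pu Tf t0 x0 u0 * q) * w)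
    - ((px (px Xf) t0 x0 u0 + pu (px Xf) t0 x0 u0 * q + (px (pu Xf) t0 x0 u0 + pu (pu Xf) t0 x0 u0 * q) * q + pu Xf t0 x0 u0 * r) * q
       + 2 * (px Xf t0 x0 u0 + pu Xf t0 x0 u0 * q) * r)) (at x0)"
    by (auto intro!: derivative_eq_intros hc' ch smooth3_px smooth3_pu T X E simp: algebra_simps c0)
  then show ?thesis unfolding dx_def[of "dx _"] eq by (rule DERIV_imp_deriv)
qed

definition PHI :: "real \<Rightarrow> real \<Rightarrow> real \<Rightarrow> real \<Rightarrow> real \<Rightarrow> real \<Rightarrow> real \<Rightarrow>
   real \<Rightarrow> real \<Rightarrow> real \<Rightarrow> real \<Rightarrow> real \<Rightarrow> real \<Rightarrow> real \<Rightarrow>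
   real \<Rightarrow> real \<Rightarrow> real \<Rightarrow> real \<Rightarrow> real \<Rightarrow> real \<Rightarrow> real \<Rightarrow> real \<Rightarrow> real \<Rightarrow> real \<Rightarrow> real" where
  "PHI e1 e2 e3 e4 e5 e6 e7 a1 a2 a3 a4 a5 a6 a7 k1 k2 k3 k4 k5 k6 k7 q r w =
   (
   (e1 + e2*(- ((q+r)^2)) - (a1 + a3*(- ((q+r)^2)))*(- ((q+r)^2)) - (k1 + k3*(- ((q+r)^2)))*q)
   + 2*(q+r)*((e3 + e2*q - (a2 + a3*q)*(- ((q+r)^2)) - (k2 + k3*q)*q)
     + ((e4 + e5*q) + (e6 + e7*q)*q + e2*r
        - ((a4 + a5*q + (a6 + a7*q)*q + a3*r)*(- ((q+r)^2)) + 2*(a2 + a3*q)*w)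
        - ((k4 + k5*q + (k6 + k7*q)*q + k3*r)*q + 2*(k2 + k3*q)*r))))"

definition Uq where "Uq t0 x0 u0 q r w = QF t0 x0 u0 (- ((q+r)^2)) q w (r/2)"

lemma eqn_Uq: "eqn (Uq t0 x0 u0 q r w) t0 x0"
  unfolding eqn_def Uq_def dt_QF dx_QF by (simp add: QF_def)

lemma prol_formula:
  assumes T: "smooth3 Tf" and X: "smooth3 Xf" and E: "smooth3 Ef"
  shows "prolF (VF Tf Xf Ef) (Uq t0 x0 u0 q r w) t0 x0 =
    PHI (pt Ef t0 x0 u0) (pu Ef t0 x0 u0) (px Ef t0 x0 u0) (px (px Ef) t0 x0 u0) (pu (px Ef) t0 x0 u0)
        (px (pu Ef) t0 x0 u0) (pu (pu Ef) t0 x0 u0)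
        (pt Tf t0 x0 u0) (px Tf t0 x0 u0) (pu Tf t0 x0 u0) (px (px Tf) t0 x0 u0) (pu (px Tf) t0 x0 u0)
        (px (pu Tf) t0 x0 u0) (pu (pu Tf) t0 x0 u0)
        (pt Xf t0 x0 u0) (px Xf t0 x0 u0) (pu Xf t0 x0 u0) (px (px Xf) t0 x0 u0) (pu (px Xf) t0 x0 u0)
        (px (pu Xf) t0 x0 u0) (pu (pu Xf) t0 x0 u0) q r w"
proof -
  have U0: "QF t0 x0 u0 (- ((q+r)^2)) q w (r/2) t0 x0 = u0" by (simp add: QF_def)
  show ?thesis
    unfolding prolF_def etaT_def etaX_def etaXX_def Uq_def
    unfolding dt_char[OF T X E] dx_char[OF T X E] dxx_char[OF T X E] dt_QF dx_QF U0
    by (simp add: QF_def PHI_def Let_def algebra_simps)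
qed

lemma extract1:
  assumes h: "\<And>q r w. PHI e1 e2 e3 e4 e5 e6 e7 a1 a2 a3 a4 a5 a6 a7 k1 k2 k3 k4 k5 k6 k7 q r w = 0"
  shows "a2 = 0 \<and> a3 = 0"
  using h[of 0 1 1] h[of 0 1 0] h[of 1 0 1] h[of 1 0 0] by (simp add: PHI_def algebra_simps)

lemma extract2:
  assumes h: "\<And>q r. PHI e1 e2 e3 e4 e5 e6 e7 a1 0 0 0 0 0 0 k1 k2 k3 k4 k5 k6 k7 q r 0 = 0"
  shows "e1 = 0 \<and> k1 = 0 \<and> k3 = 0 \<and> e3 + e4 = 0 \<and> e2 + a1 - 4*k2 = 0 \<and> k2 + e5 + e6 - k4 = 0"
proof -
  note H = h[of 0 0] h[of 1 "-1"] h[of 0 1] h[of 0 "-1"] h[of 1 0] h[of 1 "-2"] h[of "-1" 2] h[of "-1" 0] h[of 2 "-1"]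
  from H show ?thesis by (simp add: PHI_def algebra_simps)
qed

lemma lincomb_eq: "lincomb c = VF (\<lambda>t x u. c 3 + c 5 * t) (\<lambda>t x u. - c 1) (\<lambda>t x u. - c 2 * exp (- x) + c 4 - c 5 * u)"
proof -
  have S: "{1..5::nat} = {1,2,3,4,5}" by auto
  show ?thesis unfolding lincomb_def S by (simp add: X_def vzero_def fun_eq_iff algebra_simps)
qed

lemma indep: "lincomb c = vzero \<Longrightarrow> \<forall>i\<in>{1..5}. c i = 0"
proof -
  assume h: "lincomb c = vzero"
  have t: "\<And>t. c 3 + c 5 * t = 0" and xx: "- c 1 = 0" and e: "\<And>x u. - c 2 * exp (- x) + c 4 - c 5 * u = 0"
    using h unfolding lincomb_eq vzero_def by (auto simp: fun_eq_iff)
  have "c 3 = 0" using t[of 0] by simp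
  moreover have "c 5 = 0" using t[of 1] t[of 0] by simp
  moreover have "c 1 = 0" using xx by simp
  moreover have "c 4 - c 2 = 0" using e[of 0 0] by simp
  moreover have "c 4 - c 2 * exp (-1) = 0" using e[of 1 0] by simp
  moreover have "exp (-1::real) \<noteq> 1" by simp
  ultimately have "c 2 * (1 - exp (-1)) = 0" by (simp add: algebra_simps)
  then have "c 2 = 0" using \<open>exp (-1::real) \<noteq> 1\<close> by simp
  moreover have S: "{1..5::nat} = {1,2,3,4,5}" by auto
  ultimately show ?thesis using \<open>c 4 - c 2 = 0\<close> \<open>c 1 = 0\<close> \<open>c 3 = 0\<close> \<open>c 5 = 0\<close> by (simp add: S)
qed

lemma pt_const[simp]: "pt (\<lambda>t x u. a) = (\<lambda>t x u. 0)" and px_const[simp]: "px (\<lambda>t x u. a) = (\<lambda>t x u. 0)"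
  and pu_const[simp]: "pu (\<lambda>t x u. a) = (\<lambda>t x u. 0)"
  by (simp_all add: pt_def px_def pu_def)

lemma pt_t[simp]: "pt (\<lambda>t x u. t) = (\<lambda>t x u. 1)" and px_t[simp]: "px (\<lambda>t x u. t) = (\<lambda>t x u. 0)"
  and pu_t[simp]: "pu (\<lambda>t x u. t) = (\<lambda>t x u. 0)"
  by (simp_all add: pt_def px_def pu_def)

lemma pt_u[simp]: "pt (\<lambda>t x u. - u) = (\<lambda>t x u. 0)" and px_u[simp]: "px (\<lambda>t x u. - u) = (\<lambda>t x u. 0)"
  and pu_u[simp]: "pu (\<lambda>t x u. - u) = (\<lambda>t x u. - 1)"
  by (simp_all add: pt_def px_def pu_def)

lemma pt_e[simp]: "pt (\<lambda>t x u. - exp (- x)) = (\<lambda>t x u. 0)" and px_e[simp]: "px (\<lambda>t x u. - exp (- x)) = (\<lambda>t x u. exp (- x))"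
  and pu_e[simp]: "pu (\<lambda>t x u. - exp (- x)) = (\<lambda>t x u. 0)"
  by (auto simp: pt_def px_def pu_def fun_eq_iff intro!: DERIV_imp_deriv derivative_eq_intros)

lemma brackets:
  shows "bracket (X 1) (X 2) = X 2
    \<and> bracket (X 2) (X 5) = vneg (X 2)
    \<and> bracket (X 3) (X 5) = X 3
    \<and> bracket (X 4) (X 5) = vneg (X 4)
    \<and> bracket (X 1) (X 3) = vzero
    \<and> bracket (X 1) (X 4) = vzero
    \<and> bracket (X 1) (X 5) = vzero
    \<and> bracket (X 2) (X 3) = vzero
    \<and> bracket (X 2) (X 4) = vzero
    \<and> bracket (X 3) (X 4) = vzero"
  by (simp add: bracket_def vapp_def X_def vzero_def vneg_def fun_eq_iff)



definition EF :: "real \<Rightarrow> real \<Rightarrow> real \<Rightarrow> real \<Rightarrow> fn3" where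
  "EF a b g d = (\<lambda>t x u. a + b*t + g*u + d*exp (-x))"

lemma pt_EF: "pt (EF a b g d) = EF b 0 0 0"
  unfolding pt_def EF_def by (intro ext DERIV_imp_deriv) (auto intro!: derivative_eq_intros)
lemma px_EF: "px (EF a b g d) = EF 0 0 0 (-d)"
  unfolding px_def EF_def by (intro ext DERIV_imp_deriv) (auto intro!: derivative_eq_intros)
lemma pu_EF: "pu (EF a b g d) = EF g 0 0 0"
  unfolding pu_def EF_def by (intro ext DERIV_imp_deriv) (auto intro!: derivative_eq_intros)

lemma partials3_EF: "h \<in> partials3 (EF a b g d) \<Longrightarrow> \<exists>a b g d. h = EF a b g d"
  by (induction h rule: partials3.induct) (blast, (auto simp: pt_EF)[1], blast, (auto simp: px_EF)[1], blast, (auto simp: pu_EF)[1], blast)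

lemma dexp: "(\<lambda>x::real. exp (- x)) differentiable at y"
  unfolding real_differentiable_def by (rule exI) (auto intro!: derivative_eq_intros)

lemma smooth3_EF: "smooth3 (EF a b g d)"
  unfolding smooth3_def
proof
  fix h assume "h \<in> partials3 (EF a b g d)"
  then obtain a b g d where h: "h = EF a b g d" using partials3_EF by blast
  show "continuous_on UNIV (\<lambda>(t, x, u). h t x u) \<and>
         (\<forall>t x u. (\<lambda>s. h s x u) differentiable at t \<and> (\<lambda>s. h t s u) differentiable at x \<and> (\<lambda>s. h t x s) differentiable at u)"
    unfolding h EF_def by (auto intro!: continuous_intros derivative_intros dexp simp: case_prod_unfold)
qed

lemma lincomb_EF: "lincomb c = VF (EF (c 3) (c 5) 0 0) (EF (- c 1) 0 0 0) (EF (c 4) 0 (- c 5) (- c 2))"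
  unfolding lincomb_eq EF_def by (simp add: fun_eq_iff algebra_simps)

lemma smooth2_D:
  assumes "smooth2 U" "g \<in> partials2 U"
  shows "((\<lambda>s. g s x) has_real_derivative dt g t x) (at t)" "((\<lambda>s. g t s) has_real_derivative dx g t x) (at x)"
  using assms unfolding smooth2_def dt_def dx_def by (auto simp: DERIV_deriv_iff_real_differentiable)

lemma dt_eqI: "((\<lambda>s. F s x) has_real_derivative D) (at t) \<Longrightarrow> dt F t x = D"
  by (simp add: dt_def DERIV_imp_deriv)
lemma dx_eqI: "((\<lambda>s. F t s) has_real_derivative D) (at x) \<Longrightarrow> dx F t x = D"
  by (simp add: dx_def DERIV_imp_deriv)

lemma sound:
  assumes U: "smooth2 U" and e: "eqn U t x"
  shows "prolF (lincomb c) U t x = 0"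
proof -
  note P = partials2.intros
  have m1: "dt U \<in> partials2 U" "dx U \<in> partials2 U" using P by blast+
  have m2: "dt (dt U) \<in> partials2 U" "dx (dx U) \<in> partials2 U" "dx (dt U) \<in> partials2 U" "dt (dx U) \<in> partials2 U"
    using P m1 by blast+
  have m3: "dx (dx (dt U)) \<in> partials2 U" "dx (dx (dx U)) \<in> partials2 U" using P m2 by blast+
  note D = smooth2_D[OF U]
  have ch: "charQ (lincomb c) U = (\<lambda>t x. c 4 - c 2 * exp (-x) - c 5 * U t x - (c 3 + c 5 * t) * dt U t x + c 1 * dx U t x)"
    unfolding charQ_def lincomb_EF by (simp add: EF_def fun_eq_iff algebra_simps)
  have dT: "((\<lambda>s. U s x) has_real_derivative dt U t x) (at t)"
      "((\<lambda>s. dt U s x) has_real_derivative dt (dt U) t x) (at t)"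
      "((\<lambda>s. dx U s x) has_real_derivative dt (dx U) t x) (at t)"
    using D(1) partials2.intros(1) m1 by blast+
  have dX: "((\<lambda>s. U t s) has_real_derivative dx U t y) (at y)"
      "((\<lambda>s. dt U t s) has_real_derivative dx (dt U) t y) (at y)"
      "((\<lambda>s. dx U t s) has_real_derivative dx (dx U) t y) (at y)"
      "((\<lambda>s. dx (dt U) t s) has_real_derivative dx (dx (dt U)) t y) (at y)"
      "((\<lambda>s. dx (dx U) t s) has_real_derivative dx (dx (dx U)) t y) (at y)" for y
    using D(2) partials2.intros(1) m1 m2 by blast+
  have cht: "dt (charQ (lincomb c) U) t x = - c 5 * dt U t x - (c 5 * dt U t x + (c 3 + c 5 * t) * dt (dt U) t x) + c 1 * dt (dx U) t x"
    apply (rule dt_eqI) unfolding ch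
    by (auto intro!: derivative_eq_intros dT simp: algebra_simps)
  have chx: "dx (charQ (lincomb c) U) t = (\<lambda>x. c 2 * exp (-x) - c 5 * dx U t x - (c 3 + c 5 * t) * dx (dt U) t x + c 1 * dx (dx U) t x)"
    apply (rule ext, rule dx_eqI) unfolding ch
    by (auto intro!: derivative_eq_intros dX simp: algebra_simps)
  have chxx: "dx (dx (charQ (lincomb c) U)) t x = - c 2 * exp (-x) - c 5 * dx (dx U) t x - (c 3 + c 5 * t) * dx (dx (dt U)) t x + c 1 * dx (dx (dx U)) t x"
    apply (rule dx_eqI) unfolding chx
    by (auto intro!: derivative_eq_intros dX simp: algebra_simps)
  have "prolF (lincomb c) U t x = -2 * c 5 * (dt U t x + (dx U t x + dx (dx U) t x)^2)"
    unfolding prolF_def etaT_def etaX_def etaXX_def cht chxx chx[THEN fun_cong]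
    by (simp add: lincomb_EF EF_def algebra_simps power2_eq_square)
  then show ?thesis using e by (simp add: eqn_def)
qed

lemma const_all: "(\<And>s. (f has_real_derivative 0) (at s)) \<Longrightarrow> f a = f b"
  by (metis DERIV_isconst_all)

lemma complete:
  assumes sym: "is_sym Q"
  shows "\<exists>c. Q = lincomb c"
proof -
  obtain Tf Xf Ef where Q: "Q = VF Tf Xf Ef" by (cases Q)
  have sT: "smooth3 Tf" and sX: "smooth3 Xf" and sE: "smooth3 Ef" using sym Q by (auto simp: is_sym_def)
  have H: "PHI (pt Ef t0 x0 u0) (pu Ef t0 x0 u0) (px Ef t0 x0 u0) (px (px Ef) t0 x0 u0) (pu (px Ef) t0 x0 u0)
        (px (pu Ef) t0 x0 u0) (pu (pu Ef) t0 x0 u0)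
        (pt Tf t0 x0 u0) (px Tf t0 x0 u0) (pu Tf t0 x0 u0) (px (px Tf) t0 x0 u0) (pu (px Tf) t0 x0 u0)
        (px (pu Tf) t0 x0 u0) (pu (pu Tf) t0 x0 u0)
        (pt Xf t0 x0 u0) (px Xf t0 x0 u0) (pu Xf t0 x0 u0) (px (px Xf) t0 x0 u0) (pu (px Xf) t0 x0 u0)
        (px (pu Xf) t0 x0 u0) (pu (pu Xf) t0 x0 u0) q r w = 0" for t0 x0 u0 q r w
  proof -
    have "smooth2 (Uq t0 x0 u0 q r w)" unfolding Uq_def by (rule smooth2_QF)
    then have "prolF Q (Uq t0 x0 u0 q r w) t0 x0 = 0" using sym eqn_Uq by (auto simp: is_sym_def)
    then show ?thesis using prol_formula[OF sT sX sE] Q by simp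
  qed
  have T1: "px Tf t x u = 0 \<and> pu Tf t x u = 0" for t x u using extract1[OF H] .
  have pxT: "px Tf = (\<lambda>_ _ _. 0)" and puT: "pu Tf = (\<lambda>_ _ _. 0)" using T1 by (auto simp: fun_eq_iff)
  have E: "pt Ef t x u = 0 \<and> pt Xf t x u = 0 \<and> pu Xf t x u = 0 \<and> px Ef t x u + px (px Ef) t x u = 0
     \<and> pu Ef t x u + pt Tf t x u - 4 * px Xf t x u = 0
     \<and> px Xf t x u + pu (px Ef) t x u + px (pu Ef) t x u - px (px Xf) t x u = 0" for t x u
    using extract2[OF H[of t x u _ _ 0, unfolded pxT puT px_const pu_const]] by simp
  define g where "g x = Xf 0 x 0" for x
  have XfE: "Xf t x u = g x" for t x u
  proof -
    have "Xf t x u = Xf 0 x u"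
      using const_all[of "\<lambda>s. Xf s x u"] smooth3_Dt[OF sX] E by metis
    also have "\<dots> = Xf 0 x 0"
      using const_all[of "\<lambda>s. Xf 0 x s"] smooth3_Du[OF sX] E by metis
    finally show ?thesis by (simp add: g_def)
  qed
  define g1 where "g1 x = deriv g x" for x
  define g2 where "g2 x = deriv g1 x" for x
  define g3 where "g3 x = deriv g2 x" for x
  have pxX: "px Xf = (\<lambda>t x u. g1 x)" by (simp add: fun_eq_iff px_def XfE g1_def)
  have pxxX: "px (px Xf) = (\<lambda>t x u. g2 x)" unfolding pxX by (simp add: fun_eq_iff px_def g2_def)
  have pxxxX: "px (px (px Xf)) = (\<lambda>t x u. g3 x)" unfolding pxxX by (simp add: fun_eq_iff px_def g3_def)
  have hg: "(g has_real_derivative g1 x) (at x)" for x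
    using smooth3_Dx[OF sX, of 0 0 x] by (simp add: XfE pxX)
  have hg1: "(g1 has_real_derivative g2 x) (at x)" for x
    using smooth3_Dx[OF smooth3_px[OF sX], of 0 0 x, unfolded pxX] by (simp add: px_def g2_def[symmetric])
  have hg2: "(g2 has_real_derivative g3 x) (at x)" for x
    using smooth3_Dx[OF smooth3_px[OF smooth3_px[OF sX]], of 0 0 x, unfolded pxxX] by (simp add: px_def g3_def[symmetric])
  define T where "T t = Tf t 0 0" for t
  have TfE: "Tf t x u = T t" for t x u
  proof -
    have "Tf t x u = Tf t 0 u"
      using const_all[of "\<lambda>s. Tf t s u"] smooth3_Dx[OF sT] T1 by metis
    also have "\<dots> = Tf t 0 0"
      using const_all[of "\<lambda>s. Tf t 0 s"] smooth3_Du[OF sT] T1 by metis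
    finally show ?thesis by (simp add: T_def)
  qed
  define k where "k = deriv T 0"
  have ptT0: "pt Tf t x u = deriv T t" for t x u by (simp add: pt_def TfE)
  have EfE0: "Ef t x u = Ef 0 x u" for t x u
    using const_all[of "\<lambda>s. Ef s x u"] smooth3_Dt[OF sE] E by metis
  have puE0: "pu Ef t x u = pu Ef 0 x u" for t x u
  proof -
    have "Ef t x = Ef 0 x" by (rule ext) (rule EfE0)
    then show ?thesis by (simp add: pu_def)
  qed
  have dT: "deriv T t = k" for t
  proof -
    have "deriv T t = 4 * g1 0 - pu Ef 0 0 0" using E[of t 0 0] by (simp add: ptT0 pxX puE0[of t])
    moreover have "deriv T 0 = 4 * g1 0 - pu Ef 0 0 0" using E[of 0 0 0] by (simp add: ptT0 pxX)
    ultimately show ?thesis by (simp add: k_def)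
  qed
  have TE: "T t = T 0 + k * t" for t
  proof -
    have "((\<lambda>s. T s - k * s) has_real_derivative 0) (at s)" for s
      using smooth3_Dt[OF sT, of 0 0 s] by (auto intro!: derivative_eq_intros simp: TfE ptT0 dT)
    from const_all[OF this, of t 0] show ?thesis by simp
  qed
  define a where "a x = 4 * g1 x - k" for x
  define b where "b x = Ef 0 x 0" for x
  have puEa: "pu Ef t x u = a x" for t x u
    using E[of 0 x u] by (simp add: puE0[of t] ptT0 dT pxX a_def)
  have EfE: "Ef t x u = b x + a x * u" for t x u
  proof -
    have "((\<lambda>s. Ef 0 x s - a x * s) has_real_derivative 0) (at s)" for s
      using smooth3_Du[OF sE, of 0 x s] by (auto intro!: derivative_eq_intros simp: puEa)
    from const_all[OF this, of u 0] show ?thesis by (simp add: EfE0[of t] b_def)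
  qed
  define b1 where "b1 x = px Ef 0 x 0" for x
  have hb: "(b has_real_derivative b1 x) (at x)" for x
    unfolding b_def[abs_def] b1_def using smooth3_Dx[OF sE, of 0 0 x] by simp
  have ha: "(a has_real_derivative 4 * g2 x) (at x)" for x
    unfolding a_def[abs_def] by (auto intro!: derivative_eq_intros hg1)
  have pxE: "px Ef = (\<lambda>t x u. b1 x + 4 * g2 x * u)"
  proof (intro ext)
    fix t x u
    have "((\<lambda>s. Ef t s u) has_real_derivative b1 x + 4 * g2 x * u) (at x)"
      unfolding EfE by (auto intro!: derivative_eq_intros hb ha)
    then show "px Ef t x u = b1 x + 4 * g2 x * u" by (simp add: px_def DERIV_imp_deriv)
  qed
  define b2 where "b2 x = px (px Ef) 0 x 0" for x
  have hb1: "(b1 has_real_derivative b2 x) (at x)" for x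
    using smooth3_Dx[OF smooth3_px[OF sE], of 0 0 x] by (simp add: pxE b2_def)
  have pxxE: "px (px Ef) = (\<lambda>t x u. b2 x + 4 * g3 x * u)"
  proof (intro ext)
    fix t x u
    have "((\<lambda>s. b1 s + 4 * g2 s * u) has_real_derivative b2 x + 4 * g3 x * u) (at x)"
      by (auto intro!: derivative_eq_intros hb1 hg2)
    then show "px (px Ef) t x u = b2 x + 4 * g3 x * u" unfolding pxE by (simp add: px_def DERIV_imp_deriv)
  qed
  have pupxE: "pu (px Ef) t x u = 4 * g2 x" for t x u
  proof -
    have "((\<lambda>s. b1 x + 4 * g2 x * s) has_real_derivative 4 * g2 x) (at u)"
      by (auto intro!: derivative_eq_intros)
    then show ?thesis unfolding pxE by (simp add: pu_def DERIV_imp_deriv)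
  qed
  have pxpuE: "px (pu Ef) t x u = 4 * g2 x" for t x u
  proof -
    have "pu Ef = (\<lambda>t x u. a x)" by (simp add: fun_eq_iff puEa)
    then show ?thesis using ha by (simp add: px_def[of "\<lambda>t x u. a x"] DERIV_imp_deriv)
  qed
  have eb: "b1 x + b2 x = 0" for x using E[of 0 x 0, unfolded pxxE, unfolded pxE] by simp
  have e23: "g2 x + g3 x = 0" for x using E[of 0 x 1, unfolded pxxE, unfolded pxE] eb[of x] by simp
  have e12: "g1 x + 7 * g2 x = 0" for x using E[of 0 x 0, unfolded pxxX pupxE pxpuE] by (simp add: pxX)
  have e23': "g2 x + 7 * g3 x = 0" for x
  proof -
    have "((\<lambda>x. g1 x + 7 * g2 x) has_real_derivative g2 x + 7 * g3 x) (at x)"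
      by (auto intro!: derivative_eq_intros hg1 hg2)
    moreover have "(\<lambda>x. g1 x + 7 * g2 x) = (\<lambda>x. 0)" using e12 by auto
    ultimately have "((\<lambda>x. 0) has_real_derivative g2 x + 7 * g3 x) (at x)" by simp
    moreover have "((\<lambda>x. 0) has_real_derivative 0) (at x)" by simp
    ultimately show ?thesis using DERIV_unique by blast
  qed
  have g1z: "g1 x = 0" for x using e12[of x] e23[of x] e23'[of x] by linarith
  have gE: "g x = g 0" for x using const_all[of g x 0] hg g1z by metis
  have b1E: "b1 x = b1 0 * exp (- x)" for x
  proof -
    have "((\<lambda>x. b1 x * exp x) has_real_derivative 0) (at s)" for s
    proof -
      have "b2 s = - b1 s" using eb[of s] by linarith
      then show ?thesis by (auto intro!: derivative_eq_intros hb1)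
    qed
    from const_all[OF this, of x 0] have "b1 x * exp x = b1 0" by simp
    then show ?thesis by (simp add: exp_minus field_simps)
  qed
  have bE: "b x = b 0 + b1 0 - b1 0 * exp (- x)" for x
  proof -
    have "((\<lambda>x. b x + b1 0 * exp (- x)) has_real_derivative 0) (at s)" for s
      by (auto intro!: derivative_eq_intros hb simp: b1E[of s])
    from const_all[OF this, of x 0] show ?thesis by simp
  qed
  define c where "c i = (if i = (1::nat) then - g 0 else if i = 2 then b1 0 else if i = 3 then T 0
      else if i = 4 then b 0 + b1 0 else k)" for i
  have 1: "Tf t x u = c 3 + c 5 * t" for t x u using TE[of t] by (simp add: TfE c_def)
  have 2: "Xf t x u = - c 1" for t x u using gE[of x] by (simp add: XfE c_def)
  have 3: "Ef t x u = - c 2 * exp (- x) + c 4 - c 5 * u" for t x u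
    using bE[of x] by (simp add: EfE a_def g1z c_def algebra_simps)
  have "Q = lincomb c"
    unfolding lincomb_eq Q using 1 2 3 by (simp add: fun_eq_iff)
  then show ?thesis by blast
qed


theorem mainTheorem2:
  shows "(\<forall>Q. is_sym Q \<longleftrightarrow> (\<exists>c. Q = lincomb c))
    \<and> (\<forall>c. lincomb c = vzero \<longrightarrow> (\<forall>i\<in>{1..5}. c i = 0))
    \<and> bracket (X 1) (X 2) = X 2
    \<and> bracket (X 2) (X 5) = vneg (X 2)
    \<and> bracket (X 3) (X 5) = X 3
    \<and> bracket (X 4) (X 5) = vneg (X 4)
    \<and> bracket (X 1) (X 3) = vzero
    \<and> bracket (X 1) (X 4) = vzero
    \<and> bracket (X 1) (X 5) = vzero
    \<and> bracket (X 2) (X 3) = vzero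
    \<and> bracket (X 2) (X 4) = vzero
    \<and> bracket (X 3) (X 4) = vzero"
proof -
  have A: "\<forall>Q. is_sym Q \<longleftrightarrow> (\<exists>c. Q = lincomb c)"
  proof (intro allI iffI)
    fix Q assume "is_sym Q" then show "\<exists>c. Q = lincomb c" by (rule complete)
  next
    fix Q assume "\<exists>c. Q = lincomb c"
    then obtain c where Q: "Q = lincomb c" ..
    have "smooth3 (tau (lincomb c))" "smooth3 (xi (lincomb c))" "smooth3 (eta (lincomb c))"
      by (simp_all add: lincomb_EF smooth3_EF)
    then show "is_sym Q" unfolding is_sym_def Q using sound by blast
  qed
  show ?thesis using A indep brackets by blast
qed

end
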